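(* Let $g$ be the Lorentzian form on $\mathbb{R}^4$ with matrix $\mathrm{diag}(1,1,1,-c^2)$. For a timelike vector $u$ let $R_u$ be the equivalence relation on $\mathbb{R}^4$ defined by $x\,R_u\,y\iff g(x-y,u)=0$. If $u_1,u_2$ are non-proportional future timelike vectors, then the smallest equivalence relation containing $R_{u_1}\cup R_{u_2}$ is the total relation $\mathbb{R}^4\times\mathbb{R}^4$.
   Context: A vector $u$ is timelike if $g(u,u)<0$, and future timelike if moreover its fourth component is positive. *)

theory Defs
  imports "HOL-Analysis.Analysis"
begin

definition lorentz :: "real \<Rightarrow> real^4 \<Rightarrow> real^4 \<Rightarrow> real" where
  "lorentz c x y = x$1 * y$1 + x$2 * y$2 + x$3 * y$3 - c^2 * (x$4 * y$4)"

definition timelike :: "real \<Rightarrow> real^4 \<Rightarrow> bool" where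
  "timelike c u \<longleftrightarrow> lorentz c u u < 0"

definition future_timelike :: "real \<Rightarrow> real^4 \<Rightarrow> bool" where
  "future_timelike c u \<longleftrightarrow> timelike c u \<and> u$4 > 0"

definition Rrel :: "real \<Rightarrow> real^4 \<Rightarrow> ((real^4) \<times> (real^4)) set" where
  "Rrel c u = {p :: (real^4) \<times> (real^4). lorentz c (fst p - snd p) u = 0}"

definition equiv_closure :: "('a \<times> 'a) set \<Rightarrow> ('a \<times> 'a) set" where
  "equiv_closure r = \<Inter> {s. equiv UNIV s \<and> r \<subseteq> s}"

definition proportional :: "real^4 \<Rightarrow> real^4 \<Rightarrow> bool" where
  "proportional u v \<longleftrightarrow> (\<exists>a::real. u = a *\<^sub>R v) \<or> (\<exists>a::real. v = a *\<^sub>R u)"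

end

theory Submission
  imports Defs
begin

lemma lor_diff: "lorentz c (x - z) u = lorentz c x u - lorentz c z u"
  by (simp add: lorentz_def algebra_simps)

lemma closure_step:
  assumes "lorentz c z u1 = lorentz c x u1" "lorentz c z u2 = lorentz c y u2"
  shows "(x, y) \<in> equiv_closure (Rrel c u1 \<union> Rrel c u2)"
  unfolding equiv_closure_def
proof (rule InterI, clarify)
  fix s assume s: "equiv UNIV s" "Rrel c u1 \<union> Rrel c u2 \<subseteq> s"
  have "(x, z) \<in> s" using s(2) assms(1) by (auto simp: Rrel_def lor_diff)
  moreover have "(z, y) \<in> s" using s(2) assms(2) by (auto simp: Rrel_def lor_diff)
  ultimately show "(x, y) \<in> s" using s(1) unfolding equiv_def trans_def by blast
qed

lemma solve1:
  fixes u1 u2 :: "real^4"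
  assumes c: "c > 0" and D0: "u1$1 * u2$4 - u1$4 * u2$1 \<noteq> 0"
  shows "\<exists>z. lorentz c z u1 = \<alpha> \<and> lorentz c z u2 = \<beta>"
proof -
  define D where "D = u1$1 * u2$4 - u1$4 * u2$1"
  define a where "a = (\<alpha> * u2$4 - u1$4 * \<beta>) / D"
  define b where "b = (u2$1 * \<alpha> - u1$1 * \<beta>) / (c * c * D)"
  define z :: "real^4" where "z = (\<chi> k. if k = 1 then a else if k = 4 then b else 0)"
  have cc: "c * c \<noteq> 0" using c by simp
  have Dn: "D \<noteq> 0" using D0 D_def by simp
  have zc: "z$1 = (if (1::4) = 1 then a else 0)" "z$2 = (if (2::4) = 1 then a else 0)"
     "z$3 = (if (3::4) = 1 then a else 0)" "z$4 = b" by (simp_all add: z_def)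
  have l1: "lorentz c z u1 = u1$1 * a - c*c * u1$4 * b" using zc by (simp add: lorentz_def power2_eq_square)
  have l2: "lorentz c z u2 = u2$1 * a - c*c * u2$4 * b" using zc by (simp add: lorentz_def power2_eq_square)
  have "u1$1 * a - c*c * u1$4 * b = \<alpha>"
  proof -
    have aD: "a * D = \<alpha> * u2$4 - u1$4 * \<beta>" using Dn by (simp add: a_def)
    have bD: "b * (c*c*D) = u2$1 * \<alpha> - u1$1 * \<beta>" using Dn cc by (simp add: b_def)
    have "(u1$1 * a - c*c * u1$4 * b) * D = u1$1 * (a*D) - u1$4 * (b * (c*c*D))"
      by (simp add: algebra_simps)
    also have "\<dots> = \<alpha> * D" by (simp only: aD bD) (simp add: D_def algebra_simps)
    finally show ?thesis using Dn by simp
  qed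
  moreover have "u2$1 * a - c*c * u2$4 * b = \<beta>"
  proof -
    have aD: "a * D = \<alpha> * u2$4 - u1$4 * \<beta>" using Dn by (simp add: a_def)
    have bD: "b * (c*c*D) = u2$1 * \<alpha> - u1$1 * \<beta>" using Dn cc by (simp add: b_def)
    have "(u2$1 * a - c*c * u2$4 * b) * D = u2$1 * (a*D) - u2$4 * (b * (c*c*D))"
      by (simp add: algebra_simps)
    also have "\<dots> = \<beta> * D" by (simp only: aD bD) (simp add: D_def algebra_simps)
    finally show ?thesis using Dn by simp
  qed
  ultimately show ?thesis using l1 l2 by blast
qed

lemma solve2:
  fixes u1 u2 :: "real^4"
  assumes c: "c > 0" and D0: "u1$2 * u2$4 - u1$4 * u2$2 \<noteq> 0"
  shows "\<exists>z. lorentz c z u1 = \<alpha> \<and> lorentz c z u2 = \<beta>"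
proof -
  define D where "D = u1$2 * u2$4 - u1$4 * u2$2"
  define a where "a = (\<alpha> * u2$4 - u1$4 * \<beta>) / D"
  define b where "b = (u2$2 * \<alpha> - u1$2 * \<beta>) / (c * c * D)"
  define z :: "real^4" where "z = (\<chi> k. if k = 2 then a else if k = 4 then b else 0)"
  have cc: "c * c \<noteq> 0" using c by simp
  have Dn: "D \<noteq> 0" using D0 D_def by simp
  have zc: "z$1 = (if (1::4) = 2 then a else 0)" "z$2 = (if (2::4) = 2 then a else 0)"
     "z$3 = (if (3::4) = 2 then a else 0)" "z$4 = b" by (simp_all add: z_def)
  have l1: "lorentz c z u1 = u1$2 * a - c*c * u1$4 * b" using zc by (simp add: lorentz_def power2_eq_square)
  have l2: "lorentz c z u2 = u2$2 * a - c*c * u2$4 * b" using zc by (simp add: lorentz_def power2_eq_square)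
  have "u1$2 * a - c*c * u1$4 * b = \<alpha>"
  proof -
    have aD: "a * D = \<alpha> * u2$4 - u1$4 * \<beta>" using Dn by (simp add: a_def)
    have bD: "b * (c*c*D) = u2$2 * \<alpha> - u1$2 * \<beta>" using Dn cc by (simp add: b_def)
    have "(u1$2 * a - c*c * u1$4 * b) * D = u1$2 * (a*D) - u1$4 * (b * (c*c*D))"
      by (simp add: algebra_simps)
    also have "\<dots> = \<alpha> * D" by (simp only: aD bD) (simp add: D_def algebra_simps)
    finally show ?thesis using Dn by simp
  qed
  moreover have "u2$2 * a - c*c * u2$4 * b = \<beta>"
  proof -
    have aD: "a * D = \<alpha> * u2$4 - u1$4 * \<beta>" using Dn by (simp add: a_def)
    have bD: "b * (c*c*D) = u2$2 * \<alpha> - u1$2 * \<beta>" using Dn cc by (simp add: b_def)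
    have "(u2$2 * a - c*c * u2$4 * b) * D = u2$2 * (a*D) - u2$4 * (b * (c*c*D))"
      by (simp add: algebra_simps)
    also have "\<dots> = \<beta> * D" by (simp only: aD bD) (simp add: D_def algebra_simps)
    finally show ?thesis using Dn by simp
  qed
  ultimately show ?thesis using l1 l2 by blast
qed

lemma solve3:
  fixes u1 u2 :: "real^4"
  assumes c: "c > 0" and D0: "u1$3 * u2$4 - u1$4 * u2$3 \<noteq> 0"
  shows "\<exists>z. lorentz c z u1 = \<alpha> \<and> lorentz c z u2 = \<beta>"
proof -
  define D where "D = u1$3 * u2$4 - u1$4 * u2$3"
  define a where "a = (\<alpha> * u2$4 - u1$4 * \<beta>) / D"
  define b where "b = (u2$3 * \<alpha> - u1$3 * \<beta>) / (c * c * D)"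
  define z :: "real^4" where "z = (\<chi> k. if k = 3 then a else if k = 4 then b else 0)"
  have cc: "c * c \<noteq> 0" using c by simp
  have Dn: "D \<noteq> 0" using D0 D_def by simp
  have zc: "z$1 = (if (1::4) = 3 then a else 0)" "z$2 = (if (2::4) = 3 then a else 0)"
     "z$3 = (if (3::4) = 3 then a else 0)" "z$4 = b" by (simp_all add: z_def)
  have l1: "lorentz c z u1 = u1$3 * a - c*c * u1$4 * b" using zc by (simp add: lorentz_def power2_eq_square)
  have l2: "lorentz c z u2 = u2$3 * a - c*c * u2$4 * b" using zc by (simp add: lorentz_def power2_eq_square)
  have "u1$3 * a - c*c * u1$4 * b = \<alpha>"
  proof -
    have aD: "a * D = \<alpha> * u2$4 - u1$4 * \<beta>" using Dn by (simp add: a_def)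
    have bD: "b * (c*c*D) = u2$3 * \<alpha> - u1$3 * \<beta>" using Dn cc by (simp add: b_def)
    have "(u1$3 * a - c*c * u1$4 * b) * D = u1$3 * (a*D) - u1$4 * (b * (c*c*D))"
      by (simp add: algebra_simps)
    also have "\<dots> = \<alpha> * D" by (simp only: aD bD) (simp add: D_def algebra_simps)
    finally show ?thesis using Dn by simp
  qed
  moreover have "u2$3 * a - c*c * u2$4 * b = \<beta>"
  proof -
    have aD: "a * D = \<alpha> * u2$4 - u1$4 * \<beta>" using Dn by (simp add: a_def)
    have bD: "b * (c*c*D) = u2$3 * \<alpha> - u1$3 * \<beta>" using Dn cc by (simp add: b_def)
    have "(u2$3 * a - c*c * u2$4 * b) * D = u2$3 * (a*D) - u2$4 * (b * (c*c*D))"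
      by (simp add: algebra_simps)
    also have "\<dots> = \<beta> * D" by (simp only: aD bD) (simp add: D_def algebra_simps)
    finally show ?thesis using Dn by simp
  qed
  ultimately show ?thesis using l1 l2 by blast
qed

theorem proposition3p10:
  fixes c :: real and u1 u2 :: "real^4"
  assumes "c > 0"
    and "future_timelike c u1" and "future_timelike c u2"
    and "\<not> proportional u1 u2"
  shows "equiv_closure (Rrel c u1 \<union> Rrel c u2) = UNIV"
proof -
  have p: "u1$4 > 0" using assms(2) by (simp add: future_timelike_def)
  have ex: "\<exists>z. lorentz c z u1 = \<alpha> \<and> lorentz c z u2 = \<beta>" for \<alpha> \<beta>
  proof (cases "u1$1 * u2$4 - u1$4 * u2$1 \<noteq> 0 \<or> u1$2 * u2$4 - u1$4 * u2$2 \<noteq> 0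
              \<or> u1$3 * u2$4 - u1$4 * u2$3 \<noteq> 0")
    case True then show ?thesis using solve1 solve2 solve3 assms(1) by blast
  next
    case False
    have "u2 = (u2$4 / u1$4) *\<^sub>R u1"
    proof (subst vec_eq_iff, rule allI)
      fix i :: 4
      have "i = 1 \<or> i = 2 \<or> i = 3 \<or> i = 4" by (metis exhaust_4)
      then show "u2 $ i = ((u2$4 / u1$4) *\<^sub>R u1) $ i"
        using False p by (auto simp: field_simps)
    qed
    then have "proportional u1 u2" unfolding proportional_def by blast
    then show ?thesis using assms(4) by blast
  qed
  show ?thesis
  proof (rule set_eqI, rule iffI)
    fix p :: "(real^4) \<times> (real^4)"
    obtain x y where xy: "p = (x, y)" by (cases p)
    obtain z where "lorentz c z u1 = lorentz c x u1 \<and> lorentz c z u2 = lorentz c y u2"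
      using ex by blast
    then show "p \<in> equiv_closure (Rrel c u1 \<union> Rrel c u2)" using closure_step xy by blast
  qed simp
qed

end
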